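(* Let $\mathfrak{g}$ be a finite-dimensional real solvable Lie algebra equipped with an invariant scalar product $\langle\cdot,\cdot\rangle$ of Lorentzian signature (Witt index $1$) which is Einstein. Then $\mathfrak{g}$ is abelian.
   Context: A scalar product is a non-degenerate symmetric bilinear form; it is invariant if $\langle [x,y_1],y_2\rangle=-\langle y_1,[x,y_2]\rangle$ for all $x,y_1,y_2\in\mathfrak{g}$. It is Einstein if the bi-invariant metric on a connected Lie group with Lie algebra $\mathfrak{g}$ obtained by left translation of $\langle\cdot,\cdot\rangle$ is Einstein ($\mathrm{Ric}=\lambda\mathtt{g}$); for solvable $\mathfrak{g}$ this is equivalent to the vanishing of the Killing form. *)

theory Defs
  imports "HOL-Analysis.Analysis"
begin

definition lie_algebra :: "('a::euclidean_space \<Rightarrow> 'a \<Rightarrow> 'a) \<Rightarrow> bool" where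
  "lie_algebra br \<longleftrightarrow> bilinear br
     \<and> (\<forall>x. br x x = 0)
     \<and> (\<forall>x y z. br x (br y z) + br y (br z x) + br z (br x y) = 0)"

fun derived_series :: "('a::euclidean_space \<Rightarrow> 'a \<Rightarrow> 'a) \<Rightarrow> nat \<Rightarrow> 'a set" where
  "derived_series br 0 = UNIV"
| "derived_series br (Suc k) =
     span {br x y | x y. x \<in> derived_series br k \<and> y \<in> derived_series br k}"

definition solvable_lie :: "('a::euclidean_space \<Rightarrow> 'a \<Rightarrow> 'a) \<Rightarrow> bool" where
  "solvable_lie br \<longleftrightarrow> (\<exists>k. derived_series br k = {0})"

definition abelian_lie :: "('a::euclidean_space \<Rightarrow> 'a \<Rightarrow> 'a) \<Rightarrow> bool" where
  "abelian_lie br \<longleftrightarrow> (\<forall>x y. br x y = 0)"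

definition lie_scalar_product :: "('a::euclidean_space \<Rightarrow> 'a \<Rightarrow> real) \<Rightarrow> bool" where
  "lie_scalar_product sp \<longleftrightarrow> bilinear sp
     \<and> (\<forall>x y. sp x y = sp y x)
     \<and> (\<forall>x. (\<forall>y. sp x y = 0) \<longrightarrow> x = 0)"

definition invariant_form ::
  "('a::euclidean_space \<Rightarrow> 'a \<Rightarrow> 'a) \<Rightarrow> ('a \<Rightarrow> 'a \<Rightarrow> real) \<Rightarrow> bool" where
  "invariant_form br sp \<longleftrightarrow> (\<forall>x y1 y2. sp (br x y1) y2 = - sp y1 (br x y2))"

definition witt_index :: "('a::euclidean_space \<Rightarrow> 'a \<Rightarrow> real) \<Rightarrow> nat" where
  "witt_index sp = Max {dim V | V. subspace V \<and> (\<forall>x\<in>V. \<forall>y\<in>V. sp x y = 0)}"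

definition trace_map :: "('a::euclidean_space \<Rightarrow> 'a) \<Rightarrow> real" where
  "trace_map f = (\<Sum>b\<in>Basis. f b \<bullet> b)"

definition killing_form ::
  "('a::euclidean_space \<Rightarrow> 'a \<Rightarrow> 'a) \<Rightarrow> 'a \<Rightarrow> 'a \<Rightarrow> real" where
  "killing_form br x y = trace_map (\<lambda>z. br x (br y z))"

text \<open>Einstein: the bi-invariant metric induced by sp has Ric = lambda g.  For a
bi-invariant metric on a Lie group, Ric(x,y) = -1/4 B(x,y) with B the Killing form, so
this is the condition that the Killing form is a scalar multiple of sp.\<close>
definition einstein_form ::
  "('a::euclidean_space \<Rightarrow> 'a \<Rightarrow> 'a) \<Rightarrow> ('a \<Rightarrow> 'a \<Rightarrow> real) \<Rightarrow> bool" where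
  "einstein_form br sp \<longleftrightarrow> (\<exists>c::real. \<forall>x y. - (1/4) * killing_form br x y = c * sp x y)"

end

theory Submission
  imports Defs "HOL-Analysis.Analysis"
begin


lemma lin_left: "bilinear h \<Longrightarrow> linear (\<lambda>x. h x y)"
  by (simp add: bilinear_def)
lemma lin_right: "bilinear h \<Longrightarrow> linear (\<lambda>y. h x y)"
  by (simp add: bilinear_def)

lemma sp_sum_left: "bilinear h \<Longrightarrow> h (\<Sum>v\<in>V. g v) y = (\<Sum>v\<in>V. h (g v) y)"
  by (induction V rule: infinite_finite_induct) (auto simp: bilinear_ladd bilinear_lzero)

lemma sp_scale_left: "bilinear h \<Longrightarrow> h (c *\<^sub>R x) y = c *\<^sub>R h x y"
  by (simp add: bilinear_lmul)

lemma expand_dual: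
  fixes sp :: "'a::euclidean_space \<Rightarrow> 'a \<Rightarrow> real"
  assumes bsp: "bilinear sp" and fin: "finite V" and spn: "y \<in> span V"
    and dual: "\<And>v w. v \<in> V \<Longrightarrow> w \<in> V \<Longrightarrow> sp v (d w) = (if v = w then 1 else 0)"
  shows "y = (\<Sum>v\<in>V. sp y (d v) *\<^sub>R v)"
proof -
  obtain c where c: "y = (\<Sum>v\<in>V. c v *\<^sub>R v)"
    using spn span_finite[OF fin] by auto
  have "sp y (d w) = c w" if "w \<in> V" for w
  proof -
    have "sp y (d w) = (\<Sum>v\<in>V. c v * sp v (d w))"
      unfolding c by (simp add: sp_sum_left[OF bsp] bilinear_lmul[OF bsp])
    also have "\<dots> = (\<Sum>v\<in>V. if v = w then c v else 0)"
      by (rule sum.cong) (auto simp: dual that)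
    also have "\<dots> = c w" using fin that by simp
    finally show ?thesis .
  qed
  then show ?thesis by (simp add: c)
qed

lemma trace_dual:
  fixes sp :: "'a::euclidean_space \<Rightarrow> 'a \<Rightarrow> real"
  assumes bsp: "bilinear sp" and fin: "finite V" and spn: "\<And>y. y \<in> span V"
    and dual: "\<And>v w. v \<in> V \<Longrightarrow> w \<in> V \<Longrightarrow> sp v (d w) = (if v = w then 1 else 0)"
    and lf: "linear f"
  shows "trace_map f = (\<Sum>v\<in>V. sp (f v) (d v))"
proof -
  have "trace_map f = (\<Sum>b\<in>Basis. f (\<Sum>v\<in>V. sp b (d v) *\<^sub>R v) \<bullet> b)"
    unfolding trace_map_def using expand_dual[OF bsp fin spn dual] by metis
  also have "\<dots> = (\<Sum>b\<in>Basis. \<Sum>v\<in>V. sp b (d v) * (f v \<bullet> b))"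
    by (simp add: linear_sum[OF lf] linear_scale[OF lf] inner_sum_left)
  also have "\<dots> = (\<Sum>v\<in>V. \<Sum>b\<in>Basis. sp b (d v) * (f v \<bullet> b))"
    by (rule sum.swap)
  also have "\<dots> = (\<Sum>v\<in>V. sp (\<Sum>b\<in>Basis. (f v \<bullet> b) *\<^sub>R b) (d v))"
    by (simp add: sp_sum_left[OF bsp] bilinear_lmul[OF bsp] mult.commute)
  also have "\<dots> = (\<Sum>v\<in>V. sp (f v) (d v))"
    by (simp add: euclidean_representation)
  finally show ?thesis .
qed




lemma gram_schmidt_q:
  fixes q :: "'a::euclidean_space \<Rightarrow> 'a \<Rightarrow> real"
  assumes bq: "bilinear q" and sq: "\<And>x y. q x y = q y x"
  shows "subspace E \<Longrightarrow> (\<And>v. v \<in> E \<Longrightarrow> v \<noteq> 0 \<Longrightarrow> q v v > 0) \<Longrightarrow>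
    \<exists>B. finite B \<and> B \<subseteq> E \<and> E \<subseteq> span B \<and> (\<forall>x\<in>B. \<forall>y\<in>B. q x y = (if x = y then 1 else 0))"
proof (induction "dim E" arbitrary: E rule: less_induct)
  case less
  show ?case
  proof (cases "E \<subseteq> {0}")
    case True then show ?thesis by (intro exI[of _ "{}"]) auto
  next
    case False
    then obtain v where v: "v \<in> E" "v \<noteq> 0" by auto
    have pos: "q v v > 0" using less.prems v by auto
    define s where "s = sqrt (q v v)"
    have s: "s > 0" "s * s = q v v" using pos by (auto simp: s_def)
    define v' where "v' = (1 / s) *\<^sub>R v"
    have v'E: "v' \<in> E" using less.prems(1) v(1) by (simp add: v'_def subspace_scale)
    have qv': "q v' v' = 1"
      using s pos by (simp add: v'_def bilinear_lmul[OF bq] bilinear_rmul[OF bq])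
    define E' where "E' = {y \<in> E. q v' y = 0}"
    have subE': "subspace E'"
      using less.prems(1) unfolding E'_def subspace_def
      by (auto simp: bilinear_radd[OF bq] bilinear_rmul[OF bq] bilinear_rzero[OF bq])
    have "v' \<notin> E'" using qv' by (simp add: E'_def)
    then have "E' \<subset> E" using v'E by (auto simp: E'_def)
    moreover have sE: "span E' = E'" "span E = E" using subE' less.prems(1) by simp_all
    ultimately have "span E' \<subset> span E" by (simp only: sE)
    then have "dim E' < dim E" by (rule dim_psubset)
    then obtain B' where B': "finite B'" "B' \<subseteq> E'" "E' \<subseteq> span B'"
      "\<forall>x\<in>B'. \<forall>y\<in>B'. q x y = (if x = y then 1 else 0)"
      using less.hyps[of E'] subE' less.prems(2) by (auto simp: E'_def)
    have nin: "v' \<notin> B'" using B'(2) qv' by (auto simp: E'_def)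
    have orth: "q v' b = 0" "q b v' = 0" if "b \<in> B'" for b
      using that B'(2) sq by (auto simp: E'_def)
    have "E \<subseteq> span (insert v' B')"
    proof
      fix y assume y: "y \<in> E"
      have "y - q v' y *\<^sub>R v' \<in> E'"
        using y v'E less.prems(1) qv'
        by (simp add: E'_def subspace_diff subspace_scale bilinear_rsub[OF bq] bilinear_rmul[OF bq])
      then have "y - q v' y *\<^sub>R v' \<in> span (insert v' B')"
        using B'(3) span_mono[of B' "insert v' B'"] by auto
      moreover have "q v' y *\<^sub>R v' \<in> span (insert v' B')"
        by (simp add: span_base span_scale)
      ultimately have "(y - q v' y *\<^sub>R v') + q v' y *\<^sub>R v' \<in> span (insert v' B')"
        by (rule span_add)
      then show "y \<in> span (insert v' B')" by simp
    qed
    moreover have "insert v' B' \<subseteq> E" using B'(2) v'E by (auto simp: E'_def)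
    moreover have "\<forall>x\<in>insert v' B'. \<forall>y\<in>insert v' B'. q x y = (if x = y then 1 else 0)"
    proof (intro ballI)
      fix x y assume x: "x \<in> insert v' B'" and y: "y \<in> insert v' B'"
      show "q x y = (if x = y then 1 else 0)"
      proof (cases "x = v'")
        case True
        show ?thesis
        proof (cases "y = v'")
          case True then show ?thesis using \<open>x = v'\<close> qv' by simp
        next
          case False then have "y \<in> B'" using y by simp
          then show ?thesis using \<open>x = v'\<close> orth(1)[of y] nin by auto
        qed
      next
        case False then have xB: "x \<in> B'" using x by simp
        show ?thesis
        proof (cases "y = v'")
          case True then show ?thesis using xB orth(2)[of x] nin by auto
        next
          case False then have "y \<in> B'" using y by simp
          then show ?thesis using xB B'(4) by blast
        qed
      qed
    qed
    ultimately show ?thesis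
      using B'(1) by (intro exI[of _ "insert v' B'"]) simp
  qed
qed

lemma sub_univ: "span T = UNIV \<Longrightarrow> subspace T \<Longrightarrow> T = UNIV"
  by (metis span_eq_iff)

lemma sum_dec:
  assumes "{x + y |x y. x \<in> A \<and> y \<in> B} = UNIV" shows "\<exists>a c. a \<in> A \<and> c \<in> B \<and> z = a + c"
proof -
  have "z \<in> {x + y |x y. x \<in> A \<and> y \<in> B}" by (simp only: assms UNIV_I)
  then show ?thesis by blast
qed

locale ctx =
  fixes br :: "'a::euclidean_space \<Rightarrow> 'a \<Rightarrow> 'a"
    and sp :: "'a \<Rightarrow> 'a \<Rightarrow> real"
  assumes lie: "lie_algebra br" and scal: "lie_scalar_product sp" and inv: "invariant_form br sp"
begin

lemma bbr: "bilinear br" using lie by (simp add: lie_algebra_def)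
lemma alt[simp]: "br x x = 0" using lie by (simp add: lie_algebra_def)
lemma bsp: "bilinear sp" using scal by (simp add: lie_scalar_product_def)
lemma sym: "sp x y = sp y x" using scal by (simp add: lie_scalar_product_def)
lemma nd: "(\<And>y. sp x y = 0) \<Longrightarrow> x = 0" using scal by (simp add: lie_scalar_product_def)
lemma invr: "sp (br x y) z = - sp y (br x z)" using inv by (simp add: invariant_form_def)
lemma anti: "br x y = - br y x"
proof -
  have "br x y + br y x = br (x + y) (x + y) - br x x - br y y"
    by (simp add: bilinear_ladd[OF bbr] bilinear_radd[OF bbr] del: alt)
  then have "br x y + br y x = 0" by simp
  then show ?thesis by (simp add: eq_neg_iff_add_eq_0)
qed
lemma linbr: "linear (br x)" using bbr by (simp add: bilinear_def)

abbreviation "W \<equiv> derived_series br (Suc 0)"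
abbreviation "Z \<equiv> {z. \<forall>w\<in>W. sp z w = 0}"

lemma W_eq: "W = span {br x y | x y. True}" by simp
lemma br_in_W: "br x y \<in> W" by (auto intro: span_base)
lemma subW: "subspace W" by simp

lemma central: assumes "z \<in> Z" shows "br z x = 0" "br x z = 0"
proof -
  have "sp (br z x) y = 0" for y
  proof -
    have "sp (br z x) y = - sp (br x z) y" by (subst anti) (simp add: bilinear_lneg[OF bsp])
    also have "\<dots> = sp z (br x y)" by (simp add: invr)
    also have "\<dots> = 0" using assms br_in_W by auto
    finally show ?thesis .
  qed
  then show "br z x = 0" by (rule nd)
  then show "br x z = 0" by (subst anti) simp
qed

lemma subZ: "subspace Z"
  unfolding subspace_def
  by (auto simp: bilinear_ladd[OF bsp] bilinear_lmul[OF bsp] bilinear_lzero[OF bsp])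

lemma sp_sum_right: "sp y (\<Sum>v\<in>V. g v) = (\<Sum>v\<in>V. sp y (g v))"
  by (induction V rule: infinite_finite_induct) (auto simp: bilinear_radd[OF bsp] bilinear_rzero[OF bsp])

definition "S x = (\<Sum>b\<in>Basis. sp x b *\<^sub>R b)"

lemma S_inner: "S x \<bullet> y = sp x y"
proof -
  have "sp x y = sp x (\<Sum>b\<in>Basis. (y \<bullet> b) *\<^sub>R b)" by (simp add: euclidean_representation)
  also have "\<dots> = (\<Sum>b\<in>Basis. (y \<bullet> b) * sp x b)" by (simp add: sp_sum_right bilinear_rmul[OF bsp])
  finally have 1: "sp x y = (\<Sum>b\<in>Basis. (y \<bullet> b) * sp x b)" .
  have 2: "S x \<bullet> y = (\<Sum>b\<in>Basis. sp x b * (b \<bullet> y))" unfolding S_def by (simp add: inner_sum_left)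
  show ?thesis unfolding 1 2 by (rule sum.cong) (auto simp: inner_commute)
qed

lemma S_lin: "linear S"
  by (rule linearI) (simp_all add: S_def bilinear_ladd[OF bsp] bilinear_lmul[OF bsp]
      scaleR_add_left sum.distrib scaleR_sum_right)

lemma S_inj: "inj S"
proof (rule injI)
  fix x y assume "S x = S y"
  then have "sp (x - y) w = 0" for w
    using S_inner[of x w] S_inner[of y w] by (simp add: bilinear_lsub[OF bsp])
  then show "x = y" using nd[of "x - y"] by simp
qed

lemma case2:
  assumes WZ: "\<And>v. v \<in> W \<Longrightarrow> v \<in> Z \<Longrightarrow> v = 0" and solv: "solvable_lie br"
  shows "abelian_lie br"
proof -
  define Ws where "Ws = {y. \<forall>x\<in>W. orthogonal x y}"
  have d1: "dim Ws + dim W = DIM('a)"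
    using dim_subspace_orthogonal_to_vectors[of W UNIV] subW by (simp add: Ws_def)
  have surjS: "surj S" using linear_inj_imp_surj[OF S_lin S_inj] .
  have "S ` Z = Ws"
  proof
    show "S ` Z \<subseteq> Ws" by (auto simp: Ws_def orthogonal_def inner_commute[of _ "S _"] S_inner)
    show "Ws \<subseteq> S ` Z"
    proof
      fix y assume y: "y \<in> Ws"
      obtain z where z: "y = S z" using surjS by (metis surjD)
      have "z \<in> Z" using y by (auto simp: Ws_def orthogonal_def z inner_commute[of _ "S _"] S_inner)
      then show "y \<in> S ` Z" using z by auto
    qed
  qed
  moreover have "dim (S ` Z) = dim Z"
    by (rule dim_image_eq[OF S_lin]) (meson S_inj inj_on_subset subset_UNIV)
  ultimately have d2: "dim Z + dim W = DIM('a)" using d1 by simp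
  have "W \<inter> Z = {0}" using WZ subspace_0[OF subW] subspace_0[OF subZ] by blast
  then have "dim {x + y |x y. x \<in> W \<and> y \<in> Z} = DIM('a)"
    using dim_sums_Int[OF subW subZ] d2 by simp
  then have "span {x + y |x y. x \<in> W \<and> y \<in> Z} = UNIV" using dim_eq_full by auto
  then have sumU: "{x + y |x y. x \<in> W \<and> y \<in> Z} = UNIV"
    using subspace_sums[OF subW subZ] sub_univ by blast
  have brW: "br x y \<in> {br a b | a b. a \<in> W \<and> b \<in> W}" for x y
  proof -
    obtain a c where ac: "a \<in> W" "c \<in> Z" "x = a + c" using sum_dec[OF sumU, of x] by (elim exE conjE)
    obtain a' c' where ac': "a' \<in> W" "c' \<in> Z" "y = a' + c'" using sum_dec[OF sumU, of y] by (elim exE conjE)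
    have z: "br c a' = 0" "br a c' = 0" "br c c' = 0"
      using central(1)[OF ac(2)] central(2)[OF ac'(2)] by auto
    have "br x y = br a a' + br a c' + (br c a' + br c c')"
      unfolding ac(3) ac'(3) by (simp only: bilinear_ladd[OF bbr] bilinear_radd[OF bbr] ac_simps)
    then have "br x y = br a a'" by (simp only: z add_0_right)
    then show ?thesis using ac ac' by blast
  qed
  have DW: "derived_series br (Suc k) = W" for k
  proof (induction k)
    case 0 then show ?case by simp
  next
    case (Suc k)
    have "derived_series br (Suc (Suc k)) = span {br x y |x y. x \<in> W \<and> y \<in> W}"
      using Suc by simp
    also have "\<dots> = W"
    proof
      show "span {br x y |x y. x \<in> W \<and> y \<in> W} \<subseteq> W"
        using br_in_W subW by (intro span_minimal) auto
      have "{br x y | x y. True} \<subseteq> {br a b | a b. a \<in> W \<and> b \<in> W}" using brW by blast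
      then show "W \<subseteq> span {br x y |x y. x \<in> W \<and> y \<in> W}"
        by (simp add: span_mono)
    qed
    finally show ?case .
  qed
  obtain k where k: "derived_series br k = {0}" using solv by (auto simp: solvable_lie_def)
  show ?thesis
  proof (cases k)
    case 0 then have "(UNIV::'a set) = {0}" using k by simp
    then show ?thesis unfolding abelian_lie_def by (metis UNIV_I singletonD)
  next
    case (Suc k') then have "W = {0}" using k DW[of k'] by metis
    then show ?thesis by (metis abelian_lie_def br_in_W singletonD)
  qed
qed

end



context ctx begin

lemma lin2l: "sp (s *\<^sub>R a + t *\<^sub>R c) z = s * sp a z + t * sp c z"
  by (simp add: bilinear_ladd[OF bsp] bilinear_lmul[OF bsp])
lemma lin2r: "sp z (s *\<^sub>R a + t *\<^sub>R c) = s * sp z a + t * sp z c"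
  by (simp add: bilinear_radd[OF bsp] bilinear_rmul[OF bsp])
lemma quad: "sp (s *\<^sub>R a + t *\<^sub>R c) (s *\<^sub>R a + t *\<^sub>R c) = s * s * sp a a + 2 * s * t * sp a c + t * t * sp c c"
  unfolding lin2l lin2r using sym[of c a] by (simp add: algebra_simps)

lemma kill0:
  assumes eZ: "e \<in> Z" and e0: "e \<noteq> 0" and ein: "einstein_form br sp"
  shows "killing_form br x y = 0"
proof -
  obtain c where c: "\<And>x y. - (1/4) * killing_form br x y = c * sp x y"
    using ein by (auto simp: einstein_form_def)
  have "killing_form br e y = 0" for y
    unfolding killing_form_def trace_map_def using central(1)[OF eZ] by simp
  then have "c * sp e y = 0" for y using c[of e y] by simp
  moreover obtain w where "sp e w \<noteq> 0" using nd[of e] e0 by blast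
  ultimately have "c = 0" by auto
  then show ?thesis using c[of x y] by simp
qed

lemma witt_le:
  assumes witt: "witt_index sp = 1" and sV: "subspace V" and iso: "\<And>x y. x \<in> V \<Longrightarrow> y \<in> V \<Longrightarrow> sp x y = 0"
  shows "dim V \<le> 1"
proof -
  let ?M = "{dim V | V. subspace V \<and> (\<forall>x\<in>V. \<forall>y\<in>V. sp x y = 0)}"
  have "?M \<subseteq> {..card (Basis::'a set)}"
    using dim_subset[of _ "UNIV::'a set"] by auto
  then have "finite ?M" using finite_subset by blast
  moreover have "dim V \<in> ?M" using sV iso by blast
  ultimately have "dim V \<le> Max ?M" by simp
  then show ?thesis using witt by (simp add: witt_index_def)
qed

lemma null_span:
  assumes witt: "witt_index sp = 1" and e0: "e \<noteq> 0" and ee: "sp e e = 0"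
    and ev: "sp e v = 0" and vv: "sp v v = 0"
  shows "v \<in> span {e}"
proof (rule ccontr)
  assume nv: "v \<notin> span {e}"
  have ve: "v \<noteq> e" using nv span_base[of e "{e}"] by auto
  have ind: "independent {v, e}"
    using nv e0 by (simp add: independent_insert ve)
  have "dim (span {v, e}) = 2"
    using dim_eq_card_independent[OF ind] ve by simp
  moreover have "dim (span {v, e}) \<le> 1"
  proof (rule witt_le[OF witt])
    show "subspace (span {v, e})" by simp
    have bz: "bilinear (\<lambda>x y::'a. 0::real)"
      by (auto simp: bilinear_def intro: linearI)
    fix x y assume "x \<in> span {v, e}" "y \<in> span {v, e}"
    then show "sp x y = 0"
      using bilinear_eq[OF bsp bz, of "span {v,e}" "{v,e}" "span {v,e}" "{v,e}" x y]
      using ev vv ee sym[of v e] by auto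
  qed
  ultimately show False by simp
qed

lemma no_mix:
  assumes witt: "witt_index sp = 1" and e0: "e \<noteq> 0" and ee: "sp e e = 0"
    and ae: "sp a e = 0" and be: "sp b e = 0" and apos: "sp a a > 0" and bneg: "sp b b < 0"
  shows False
proof -
  define t where "t = sp a b / sp a a"
  define b' where "b' = 1 *\<^sub>R b + (- t) *\<^sub>R a"
  have ab': "sp a b' = 0" unfolding b'_def lin2r using apos by (simp add: t_def sym[of a b])
  have b'a: "sp b' a = 0" using ab' sym by metis
  have b'e: "sp b' e = 0" unfolding b'_def lin2l by (simp add: ae be)
  have "sp b' b' = 1 * sp b' b + (- t) * sp b' a" by (subst (2) b'_def) (rule lin2r)
  also have "\<dots> = sp b' b" using b'a by simp
  also have "\<dots> = sp b b - t * sp a b" unfolding b'_def lin2l by simp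
  also have "\<dots> = sp b b - (sp a b)^2 / sp a a" by (simp add: t_def power2_eq_square)
  also have "\<dots> \<le> sp b b" using apos by simp
  finally have b'neg: "sp b' b' < 0" using bneg by simp
  define \<alpha> where "\<alpha> = sp a a"
  define \<beta> where "\<beta> = - sp b' b'"
  have pa: "\<alpha> > 0" "\<beta> > 0" using apos b'neg by (auto simp: \<alpha>_def \<beta>_def)
  have sq: "sqrt \<alpha> * sqrt \<alpha> = \<alpha>" "sqrt \<beta> * sqrt \<beta> = \<beta>" using pa by auto
  have inspan: "sqrt \<beta> *\<^sub>R a + s *\<^sub>R b' \<in> span {e}" if s: "s = sqrt \<alpha> \<or> s = - sqrt \<alpha>" for s
  proof (rule null_span[OF witt e0 ee])
    show "sp e (sqrt \<beta> *\<^sub>R a + s *\<^sub>R b') = 0"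
      unfolding lin2r using ae b'e by (simp add: sym[of e a] sym[of e b'])
    have "s * s = \<alpha>" using s sq by auto
    then show "sp (sqrt \<beta> *\<^sub>R a + s *\<^sub>R b') (sqrt \<beta> *\<^sub>R a + s *\<^sub>R b') = 0"
      unfolding quad using ab' sq by (simp add: \<alpha>_def \<beta>_def)
  qed
  have "(sqrt \<beta> *\<^sub>R a + sqrt \<alpha> *\<^sub>R b') - (sqrt \<beta> *\<^sub>R a + (- sqrt \<alpha>) *\<^sub>R b') \<in> span {e}"
    using inspan[of "sqrt \<alpha>"] inspan[of "- sqrt \<alpha>"] by (blast intro: span_diff)
  moreover have "(2 * sqrt \<alpha>) *\<^sub>R b' = (sqrt \<beta> *\<^sub>R a + sqrt \<alpha> *\<^sub>R b') - (sqrt \<beta> *\<^sub>R a + (- sqrt \<alpha>) *\<^sub>R b')"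
    by (simp add: algebra_simps) (metis mult_2_right scaleR_left_distrib)
  ultimately have "(2 * sqrt \<alpha>) *\<^sub>R b' \<in> span {e}" by simp
  then have "(1 / (2 * sqrt \<alpha>)) *\<^sub>R ((2 * sqrt \<alpha>) *\<^sub>R b') \<in> span {e}" by (rule span_scale)
  then have "b' \<in> span {e}" using pa by simp
  then obtain k where "b' = k *\<^sub>R e" by (auto simp: span_singleton)
  then have "sp b' b' = 0" using ee by (simp add: bilinear_lmul[OF bsp] bilinear_rmul[OF bsp])
  then show False using b'neg by simp
qed

lemma sign:
  assumes witt: "witt_index sp = 1" and e0: "e \<noteq> 0" and ee: "sp e e = 0"
  shows "\<exists>\<epsilon>::real. (\<epsilon> = 1 \<or> \<epsilon> = -1) \<and> (\<forall>v. sp v e = 0 \<longrightarrow> \<epsilon> * sp v v \<ge> 0)"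
proof (cases "\<exists>a. sp a e = 0 \<and> sp a a > 0")
  case True
  then obtain a where "sp a e = 0" "sp a a > 0" by blast
  then have "\<forall>v. sp v e = 0 \<longrightarrow> 1 * sp v v \<ge> 0"
    using no_mix[OF witt e0 ee] by (metis mult_1 not_le)
  then show ?thesis by blast
next
  case False
  then have "\<forall>v. sp v e = 0 \<longrightarrow> (-1) * sp v v \<ge> 0" by (auto simp: not_less)
  then show ?thesis by blast
qed

lemma exists_u:
  assumes e0: "e \<noteq> 0" and ee: "sp e e = 0"
  shows "\<exists>u. sp e u = 1 \<and> sp u u = 0"
proof -
  obtain w where w: "sp e w \<noteq> 0" using nd[of e] e0 by blast
  define u0 where "u0 = (1 / sp e w) *\<^sub>R w"
  have eu0: "sp e u0 = 1" using w by (simp add: u0_def bilinear_rmul[OF bsp])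
  define c where "c = sp u0 u0 / 2"
  define u where "u = 1 *\<^sub>R u0 + (- c) *\<^sub>R e"
  have "sp e u = 1" unfolding u_def lin2r using eu0 ee by simp
  moreover have "sp u u = 0" unfolding u_def quad using eu0 ee sym[of u0 e]
    by (simp add: c_def)
  ultimately show ?thesis by blast
qed

end



context ctx begin

lemma case1:
  assumes eZ: "e \<in> Z" and eW: "e \<in> W" and e0: "e \<noteq> 0"
    and witt: "witt_index sp = 1" and ein: "einstein_form br sp"
  shows "abelian_lie br"
proof -
  have ee: "sp e e = 0" using eZ eW by blast
  have K0: "killing_form br x y = 0" for x y by (rule kill0[OF eZ e0 ein])
  obtain \<epsilon> :: real where eps: "\<epsilon> = 1 \<or> \<epsilon> = -1" and pos: "\<And>v. sp v e = 0 \<Longrightarrow> \<epsilon> * sp v v \<ge> 0"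
    using sign[OF witt e0 ee] by blast
  have nsp: "v \<in> span {e}" if "sp v e = 0" "sp v v = 0" for v
    using null_span[OF witt e0 ee] that sym[of v e] by simp
  obtain u where eu: "sp e u = 1" and uu: "sp u u = 0" using exists_u[OF e0 ee] by blast
  have ue: "sp u e = 1" using eu sym by metis
  have bx0: "br x e = 0" for x using central(2)[OF eZ] .
  define E where "E = {v. sp v e = 0 \<and> sp v u = 0}"
  have subE: "subspace E"
    unfolding subspace_def E_def
    by (auto simp: bilinear_ladd[OF bsp] bilinear_lmul[OF bsp] bilinear_lzero[OF bsp])
  have bq: "bilinear (\<lambda>a b. \<epsilon> * sp a b)"
    unfolding bilinear_def
    by (auto intro!: linearI simp: bilinear_ladd[OF bsp] bilinear_lmul[OF bsp]
        bilinear_radd[OF bsp] bilinear_rmul[OF bsp] algebra_simps)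
  have posE: "\<epsilon> * sp v v > 0" if "v \<in> E" "v \<noteq> 0" for v
  proof -
    have ge: "\<epsilon> * sp v v \<ge> 0" using pos that by (auto simp: E_def)
    show ?thesis
    proof (rule ccontr)
      assume "\<not> ?thesis"
      then have "sp v v = 0" using ge eps by auto
      then have "v \<in> span {e}" using nsp that by (auto simp: E_def)
      then obtain k where k: "v = k *\<^sub>R e" by (auto simp: span_singleton)
      then have "sp v u = k" using eu by (simp add: bilinear_lmul[OF bsp])
      then have "k = 0" using that by (auto simp: E_def)
      then show False using k that by simp
    qed
  qed
  obtain B where B: "finite B" "B \<subseteq> E" "E \<subseteq> span B"
    and onB: "\<forall>x\<in>B. \<forall>y\<in>B. \<epsilon> * sp x y = (if x = y then 1 else 0)"
    using gram_schmidt_q[OF bq _ subE posE] sym by auto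
  have eB: "e \<notin> B" using B(2) ue eu by (auto simp: E_def sym[of e u])
  have uB: "u \<notin> B" using B(2) ue by (auto simp: E_def)
  have eu_ne: "e \<noteq> u" using ee eu by auto
  define V where "V = insert e (insert u B)"
  define d where "d = (\<lambda>v. if v = e then u else if v = u then e else \<epsilon> *\<^sub>R v)"
  have dB: "d b = \<epsilon> *\<^sub>R b" if "b \<in> B" for b using that eB uB by (auto simp: d_def)
  have dE: "d e = u" "d u = e" using eu_ne by (auto simp: d_def)
  have de_not: "e \<notin> insert u B" "u \<notin> B" using eB uB eu_ne by auto
  have finV: "finite V" using B(1) by (simp add: V_def)
  have spB: "sp b e = 0" "sp b u = 0" "sp e b = 0" "sp u b = 0" if "b \<in> B" for b
    using that B(2) by (auto simp: E_def sym[of e b] sym[of u b])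
  have dual: "sp v (d w) = (if v = w then 1 else 0)" if "v \<in> V" "w \<in> V" for v w
  proof -
    have dB: "d b = \<epsilon> *\<^sub>R b" if "b \<in> B" for b using that eB uB by (auto simp: d_def)
    have de: "d e = u" and du: "d u = e" using eu_ne by (auto simp: d_def)
    consider "v = e" | "v = u" | "v \<in> B" using \<open>v \<in> V\<close> by (auto simp: V_def)
    then show ?thesis
    proof cases
      case 1 then show ?thesis
        using \<open>w \<in> V\<close> eu ee de du dB spB eB eu_ne
        by (auto simp: V_def bilinear_rmul[OF bsp])
    next
      case 2 then show ?thesis
        using \<open>w \<in> V\<close> ue uu de du dB spB uB eu_ne
        by (auto simp: V_def bilinear_rmul[OF bsp])
    next
      case 3
      then have ve: "v \<noteq> e" "v \<noteq> u" using eB uB by auto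
      consider "w = e" | "w = u" | "w \<in> B" using \<open>w \<in> V\<close> by (auto simp: V_def)
      then show ?thesis
      proof cases
        case 1 then show ?thesis using 3 ve de spB by auto
      next
        case 2 then show ?thesis using 3 ve du spB by auto
      next
        case w: 3
        then show ?thesis using 3 dB onB by (simp add: bilinear_rmul[OF bsp])
      qed
    qed
  qed
  have inE: "y - sp y u *\<^sub>R e - sp y e *\<^sub>R u \<in> E" for y
    unfolding E_def using ee eu ue uu sym[of e u]
    by (simp add: bilinear_lsub[OF bsp] bilinear_lmul[OF bsp])
  have spanV: "y \<in> span V" for y
  proof -
    have "y - sp y u *\<^sub>R e - sp y e *\<^sub>R u \<in> span V"
      using inE[of y] B(3) span_mono[of B V] by (auto simp: V_def)
    moreover have "e \<in> span V" "u \<in> span V" by (auto simp: V_def intro: span_base)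
    then have "sp y u *\<^sub>R e \<in> span V" "sp y e *\<^sub>R u \<in> span V"
      by (simp_all add: span_scale)
    ultimately have "(y - sp y u *\<^sub>R e - sp y e *\<^sub>R u) + sp y u *\<^sub>R e + sp y e *\<^sub>R u \<in> span V"
      by (intro span_add)
    then show ?thesis by simp
  qed
  have Bspan: "br x b \<in> span {e}" if bB: "b \<in> B" for x b
  proof -
    have lf: "linear (\<lambda>z. br x (br x z))"
      by (rule linearI) (simp_all add: linear_add[OF linbr] linear_scale[OF linbr])
    have "0 = killing_form br x x" using K0 by simp
    also have "\<dots> = (\<Sum>v\<in>V. sp (br x (br x v)) (d v))"
      unfolding killing_form_def by (rule trace_dual[OF bsp finV spanV dual lf])
    also have "\<dots> = (\<Sum>v\<in>V. - sp (br x v) (br x (d v)))"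
      by (rule sum.cong) (rule refl, rule invr)
    also have "\<dots> = - sp (br x e) (br x (d e)) + (- sp (br x u) (br x (d u)) + (\<Sum>b\<in>B. - sp (br x b) (br x (d b))))"
      unfolding V_def using B(1) de_not by (subst sum.insert, simp_all)+
    also have "\<dots> = (\<Sum>b\<in>B. - sp (br x b) (br x (d b)))"
      using dE by (simp add: bx0 bilinear_lzero[OF bsp] bilinear_rzero[OF bsp])
    also have "\<dots> = (\<Sum>b\<in>B. - (\<epsilon> * sp (br x b) (br x b)))"
      by (rule sum.cong[OF refl]) (simp add: dB linear_scale[OF linbr] bilinear_rmul[OF bsp])
    finally have sumeq: "(\<Sum>b\<in>B. \<epsilon> * sp (br x b) (br x b)) = 0"
      by (simp add: sum_negf)
    have nonneg: "\<epsilon> * sp (br x b) (br x b) \<ge> 0" if "b \<in> B" for b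
    proof (rule pos)
      show "sp (br x b) e = 0" by (subst invr) (simp add: bx0 bilinear_rzero[OF bsp])
    qed
    have "\<forall>b\<in>B. \<epsilon> * sp (br x b) (br x b) = 0"
      using sum_nonneg_eq_0_iff[OF B(1), of "\<lambda>b. \<epsilon> * sp (br x b) (br x b)"] nonneg sumeq by blast
    then have "\<epsilon> * sp (br x b) (br x b) = 0" using bB by blast
    then have "sp (br x b) (br x b) = 0" using eps by auto
    moreover have "sp (br x b) e = 0" by (subst invr) (simp add: bx0 bilinear_rzero[OF bsp])
    ultimately show ?thesis using nsp by blast
  qed
  have perp: "br x y \<in> span {e}" if "sp y e = 0" for x y
  proof -
    have sub: "subspace {z. br x z \<in> span {e}}"
      unfolding subspace_def
      by (auto simp: linear_add[OF linbr] linear_scale[OF linbr] linear_0[OF linbr]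
          intro: span_add span_scale span_zero)
    have "y - sp y u *\<^sub>R e \<in> E"
      using inE[of y] that by simp
    then have "y - sp y u *\<^sub>R e \<in> span B" using B(3) by blast
    then have "y - sp y u *\<^sub>R e \<in> {z. br x z \<in> span {e}}"
      using span_minimal[of B "{z. br x z \<in> span {e}}"] sub Bspan by blast
    then have "br x (y - sp y u *\<^sub>R e) \<in> span {e}" by simp
    moreover have "br x (y - sp y u *\<^sub>R e) = br x y"
      by (simp add: linear_diff[OF linbr] linear_scale[OF linbr] bx0)
    ultimately show ?thesis by simp
  qed
  have all: "br x y \<in> span {e}" for x y
  proof -
    define y' where "y' = y - sp y e *\<^sub>R u"
    have y'e: "sp y' e = 0" by (simp add: y'_def bilinear_lsub[OF bsp] bilinear_lmul[OF bsp] ue)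
    define x' where "x' = x - sp x e *\<^sub>R u"
    have x'e: "sp x' e = 0" by (simp add: x'_def bilinear_lsub[OF bsp] bilinear_lmul[OF bsp] ue)
    have "br u x = br u x' + sp x e *\<^sub>R br u u"
      by (simp add: x'_def linear_diff[OF linbr] linear_scale[OF linbr])
    then have "br u x \<in> span {e}" using perp[OF x'e, of u] by simp
    then have xu: "br x u \<in> span {e}" using anti[of x u] by (simp add: span_neg)
    have "br x y = br x y' + sp y e *\<^sub>R br x u"
      by (simp add: y'_def linear_diff[OF linbr] linear_scale[OF linbr])
    then show ?thesis using perp[OF y'e, of x] xu by (simp add: span_add span_scale)
  qed
  have coef: "z = sp z u *\<^sub>R e" if zs: "z \<in> span {e}" for z
  proof -
    obtain k where k: "z = k *\<^sub>R e" using zs by (auto simp: span_singleton)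
    then show ?thesis using eu by (simp add: bilinear_lmul[OF bsp])
  qed
  have xu0: "br x u = 0" for x
  proof -
    have "sp (br x u) u = - sp u (br x u)" by (rule invr)
    also have "\<dots> = - sp (br x u) u" by (simp add: sym[of u])
    finally have "sp (br x u) u = 0" by simp
    then show ?thesis using coef[OF all[of x u]] by simp
  qed
  show ?thesis unfolding abelian_lie_def
  proof (intro allI)
    fix x y
    have "sp (br x y) u = - sp y (br x u)" by (rule invr)
    then have "sp (br x y) u = 0" by (simp add: xu0 bilinear_rzero[OF bsp])
    then show "br x y = 0" using coef[OF all[of x y]] by simp
  qed
qed

end

theorem corollary5p2:
  fixes br :: "'a::euclidean_space \<Rightarrow> 'a \<Rightarrow> 'a"
    and sp :: "'a \<Rightarrow> 'a \<Rightarrow> real"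
  assumes "lie_algebra br"
    and "solvable_lie br"
    and "lie_scalar_product sp"
    and "invariant_form br sp"
    and "witt_index sp = 1"
    and "einstein_form br sp"
  shows "abelian_lie br"
proof -
  interpret ctx br sp using assms by (unfold_locales) auto
  show ?thesis
  proof (cases "\<exists>e. e \<in> W \<and> e \<in> Z \<and> e \<noteq> 0")
    case True
    then obtain e where "e \<in> W" "e \<in> Z" "e \<noteq> 0" by blast
    then show ?thesis using case1 assms by blast
  next
    case False
    then show ?thesis using case2 assms by blast
  qed
qed


end
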